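(* Let $n,m,D$ be integers such that $n^2 \ge m \ge n \ge 4$ and $n/\sqrt{m} > D \ge 3$. There exists a family $\mathcal{G}$ of $n$-vertex directed graphs with diameter $D$ and $\Theta(m)$ edges such that any data structure for graphs in $\mathcal{G}$ that decides, for a queried edge $e$, whether the fault-tolerant diameter $\mathrm{diam}(G-e)$ remains at $D$ or increases to $(3D-1)/2$ for odd $D$ (respectively to $(3D/2)-1$ for even $D$) requires $\Omega(m)$ bits of space.
   Context: Graphs are unweighted. $G-e$ is $G$ with edge $e$ removed and $\mathrm{diam}(H)=\max_{s,t} d_H(s,t)$, the maximum shortest-path distance over ordered vertex pairs ($+\infty$ if $H$ is not strongly connected). *)

theory Defs
  imports Complex_Main "HOL-Library.Extended_Nat"
begin

definition is_digraph :: "nat \<Rightarrow> (nat \<times> nat) set \<Rightarrow> bool" where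
  "is_digraph n E \<longleftrightarrow> E \<subseteq> {0..<n} \<times> {0..<n} \<and> (\<forall>v. (v, v) \<notin> E)"

definition dist :: "(nat \<times> nat) set \<Rightarrow> nat \<Rightarrow> nat \<Rightarrow> enat" where
  "dist E s t = (if \<exists>k. (s, t) \<in> E ^^ k then enat (LEAST k. (s, t) \<in> E ^^ k) else \<infinity>)"

definition diam :: "nat \<Rightarrow> (nat \<times> nat) set \<Rightarrow> enat" where
  "diam n E = Sup {dist E s t | s t. s < n \<and> t < n}"

definition fd_target :: "nat \<Rightarrow> nat" where
  "fd_target D = (if odd D then (3 * D - 1) div 2 else 3 * D div 2 - 1)"

end

theory Submission
  imports Defs
begin


datatype vx = H | P nat nat | Q nat nat | B2 nat | W nat

definition a0 :: "nat \<Rightarrow> vx" where "a0 a = (if a = 1 then H else P 0 (a - 1))"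

fun valid :: "nat \<Rightarrow> nat \<Rightarrow> nat \<Rightarrow> nat \<Rightarrow> vx \<Rightarrow> bool" where
  "valid k a b n H = True"
| "valid k a b n (P i d) = ((i = 0 \<and> 1 \<le> d \<and> d < a) \<or> (1 \<le> i \<and> i \<le> k \<and> 1 \<le> d \<and> d \<le> a))"
| "valid k a b n (Q j e) = (j < k \<and> e \<le> b)"
| "valid k a b n (B2 j) = (j < k)"
| "valid k a b n (W t) = ((k+1)*a + k*(b+1) + k \<le> t \<and> t < n)"

fun code :: "nat \<Rightarrow> nat \<Rightarrow> nat \<Rightarrow> vx \<Rightarrow> nat" where
  "code k a b H = 0"
| "code k a b (P i d) = (if i = 0 then d else i*a + (d-1))"
| "code k a b (Q j e) = (k+1)*a + j*(b+1) + e"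
| "code k a b (B2 j) = (k+1)*a + k*(b+1) + j"
| "code k a b (W t) = t"

definition decode :: "nat \<Rightarrow> nat \<Rightarrow> nat \<Rightarrow> nat \<Rightarrow> vx" where
  "decode k a b s = (if s = 0 then H else if s < a then P 0 s
     else if s < (k+1)*a then P (s div a) (s mod a + 1)
     else if s < (k+1)*a + k*(b+1) then Q ((s - (k+1)*a) div (b+1)) ((s - (k+1)*a) mod (b+1))
     else if s < (k+1)*a + k*(b+1) + k then B2 (s - ((k+1)*a + k*(b+1))) else W s)"

lemma lt_mult_aux: "j < (k::nat) \<Longrightarrow> e \<le> b \<Longrightarrow> j*(b+1) + e < k*(b+1)"
proof -
  assume "j < k" "e \<le> b"
  then have "j*(b+1) + e < (j+1)*(b+1)" by simp
  also have "\<dots> \<le> k*(b+1)" using \<open>j<k\<close> by (intro mult_right_mono) auto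
  finally show ?thesis .
qed

lemma lt_mult_aux2: "i \<le> (k::nat) \<Longrightarrow> 1 \<le> d \<Longrightarrow> d \<le> a \<Longrightarrow> i*a + (d-1) < (k+1)*a"
proof -
  assume "i \<le> k" "1 \<le> d" "d \<le> a"
  then have "i*a + (d-1) < (i+1)*a" by simp
  also have "\<dots> \<le> (k+1)*a" using \<open>i\<le>k\<close> by (intro mult_right_mono) auto
  finally show ?thesis .
qed

lemma decode_Q:
  assumes "1 \<le> a" "t < k*(b+1)"
  shows "decode k a b ((k+1)*a + t) = Q (t div (b+1)) (t mod (b+1))"
proof -
  have "a \<le> (k+1)*a" by simp
  then show ?thesis using assms by (simp add: decode_def)
qed

lemma decode_code:
  assumes "valid k a b n v" "1 \<le> a"
  shows "decode k a b (code k a b v) = v"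
proof (cases v)
  case H then show ?thesis by (simp add: decode_def)
next
  case (P i d)
  show ?thesis
  proof (cases "i = 0")
    case True then show ?thesis using assms P by (auto simp: decode_def)
  next
    case False
    then have i: "1 \<le> i" "i \<le> k" "1 \<le> d" "d \<le> a" using assms P by auto
    have lt: "i*a + (d-1) < (k+1)*a" using lt_mult_aux2 i by blast
    have ge: "a \<le> i*a + (d-1)" using i by (metis add.commute le_add2 mult_le_mono1 mult_1 trans_le_add2)
    obtain r where r: "r = d - 1" "r < a" using i by auto
    have dv: "(i*a + (d-1)) div a = i" unfolding r(1)[symmetric] using r(2) by simp
    have md: "(i*a + (d-1)) mod a = d - 1" unfolding r(1)[symmetric] using r(2) by simp
    show ?thesis using P False lt ge dv md i assms(2) by (auto simp: decode_def)
  qed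
next
  case (Q j e)
  then have j: "j < k" "e \<le> b" using assms by auto
  have lt: "j*(b+1) + e < k*(b+1)" using lt_mult_aux j by blast
  have dm: "\<And>B::nat. e < B \<Longrightarrow> (j*B + e) div B = j \<and> (j*B + e) mod B = e" by simp
  have eb: "e < b+1" using j by simp
  have dv: "(j*(b+1) + e) div (b+1) = j" using dm[OF eb] by blast
  have md: "(j*(b+1) + e) mod (b+1) = e" using dm[OF eb] by blast
  have "decode k a b ((k+1)*a + (j*(b+1) + e)) = Q ((j*(b+1) + e) div (b+1)) ((j*(b+1) + e) mod (b+1))"
    by (rule decode_Q[OF assms(2) lt])
  then show ?thesis using Q by (simp only: dv md code.simps add.assoc)
next
  case (B2 j) then show ?thesis using assms by (auto simp: decode_def)
next
  case (W t) then show ?thesis using assms by (auto simp: decode_def)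
qed

lemma code_lt:
  assumes "valid k a b n v" "(k+1)*a + k*(b+1) + k \<le> n" "1 \<le> a"
  shows "code k a b v < n"
proof (cases v)
  case (P i d)
  show ?thesis
  proof (cases "i = 0")
    case True
    then have "d < a" using assms P by auto
    moreover have "a \<le> (k+1)*a" by simp
    ultimately show ?thesis using assms P True by simp
  next
    case False
    then have "i*a + (d-1) < (k+1)*a" using lt_mult_aux2 assms P by auto
    then show ?thesis using assms P False by simp
  qed
next
  case (Q j e)
  then show ?thesis using lt_mult_aux[of j k e b] assms by auto
qed (use assms in auto)

lemma code_decode:
  assumes "s < n" "1 \<le> a" "(k+1)*a + k*(b+1) + k \<le> n"
  shows "valid k a b n (decode k a b s) \<and> code k a b (decode k a b s) = s"
proof -
  consider "s = 0" | "s \<noteq> 0" "s < a" | "a \<le> s" "s < (k+1)*a"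
    | "(k+1)*a \<le> s" "s < (k+1)*a + k*(b+1)"
    | "(k+1)*a + k*(b+1) \<le> s" "s < (k+1)*a + k*(b+1) + k"
    | "(k+1)*a + k*(b+1) + k \<le> s" by linarith
  then show ?thesis
  proof cases
    case 1 then show ?thesis by (simp add: decode_def)
  next
    case 2 then show ?thesis by (simp add: decode_def)
  next
    case 3
    have "a div a \<le> s div a" using 3 by (intro div_le_mono) auto
    then have i1: "1 \<le> s div a" using assms(2) by simp
    have ik: "s div a < k + 1" using 3 assms(2) by (simp add: div_less_iff_less_mult)
    have md: "s mod a < a" using assms(2) by simp
    have "s div a * a + s mod a = s" by simp
    then show ?thesis using 3 i1 ik md by (auto simp: decode_def)
  next
    case 4
    define r where "r = s - (k+1)*a"
    have r: "r < k*(b+1)" using 4 r_def by simp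
    have jk: "r div (b+1) < k" using r by (simp add: div_less_iff_less_mult)
    have md: "r mod (b+1) \<le> b" using mod_less_divisor[of "b+1" r] by simp
    have "a \<le> (k+1)*a" by simp
    then have "a \<le> s" "s \<noteq> 0" using 4 assms(2) by auto
    then have dec: "decode k a b s = Q (r div (b+1)) (r mod (b+1))" using 4 r_def by (simp add: decode_def)
    have e: "r div (b+1) * (b+1) + r mod (b+1) = r" by (rule div_mult_mod_eq)
    have "code k a b (Q (r div (b+1)) (r mod (b+1))) = (k+1)*a + (r div (b+1) * (b+1) + r mod (b+1))"
      by (simp only: code.simps add.assoc mult.commute)
    also have "\<dots> = s" unfolding e using 4 r_def by simp
    finally show ?thesis using dec jk md by simp
  next
    case 5 then show ?thesis by (auto simp: decode_def)
  next
    case 6 then show ?thesis using assms by (auto simp: decode_def)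
  qed
qed


lemma dist_le: "(s,t) \<in> E^^l \<Longrightarrow> dist E s t \<le> enat l"
  unfolding dist_def by (auto intro: Least_le)

lemma pot_relpow:
  assumes "\<And>x y. (x,y) \<in> E \<Longrightarrow> \<psi> y \<le> \<psi> x + (1::int)"
  shows "(s,t) \<in> E^^l \<Longrightarrow> \<psi> t \<le> \<psi> s + int l"
proof (induction l arbitrary: t)
  case 0 then show ?case by simp
next
  case (Suc l)
  then obtain z where "(s,z) \<in> E^^l" "(z,t) \<in> E" by (auto elim: relpow_Suc_E)
  then show ?case using Suc.IH assms by fastforce
qed

lemma dist_ge:
  assumes "\<And>x y. (x,y) \<in> E \<Longrightarrow> \<psi> y \<le> \<psi> x + (1::int)" "int K \<le> \<psi> t - \<psi> s"
  shows "enat K \<le> dist E s t"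
proof (cases "\<exists>l. (s,t) \<in> E^^l")
  case True
  then have "(s,t) \<in> E^^(LEAST l. (s,t) \<in> E^^l)" by (rule LeastI_ex)
  then have "\<psi> t \<le> \<psi> s + int (LEAST l. (s,t) \<in> E^^l)" using pot_relpow[of E \<psi>] assms(1) by blast
  then show ?thesis using True assms(2) unfolding dist_def by simp
next
  case False then show ?thesis unfolding dist_def by simp
qed

lemma diam_eq:
  assumes "\<And>s t. s < n \<Longrightarrow> t < n \<Longrightarrow> dist E s t \<le> enat D"
    "s0 < n" "t0 < n" "enat D \<le> dist E s0 t0"
  shows "diam n E = enat D"
  unfolding diam_def
proof (rule antisym)
  show "Sup {dist E s t |s t. s < n \<and> t < n} \<le> enat D"
    using assms(1) by (auto intro!: Sup_least)
  show "enat D \<le> Sup {dist E s t |s t. s < n \<and> t < n}"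
    using assms(2-4) by (auto intro: Sup_upper2)
qed

definition Rel :: "nat \<Rightarrow> nat \<Rightarrow> nat \<Rightarrow> nat \<Rightarrow> (nat\<times>nat) set \<Rightarrow> (nat\<times>nat) set \<Rightarrow> (vx\<times>vx) set" where
  "Rel k a b n S X =
     {(H, P i 1) | i. (i = 0 \<and> 2 \<le> a) \<or> (1 \<le> i \<and> i \<le> k)}
   \<union> {(P i d, P i (Suc d)) | i d. (i = 0 \<and> 1 \<le> d \<and> Suc d < a) \<or> (1 \<le> i \<and> i \<le> k \<and> 1 \<le> d \<and> d < a)}
   \<union> {(a0 a, Q j 0) | j. j < k} \<union> {(a0 a, B2 j) | j. j < k}
   \<union> {(P i a, Q j 0) | i j. 1 \<le> i \<and> i \<le> k \<and> j < k \<and> (i,j) \<notin> X}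
   \<union> {(P i a, B2 j) | i j. 1 \<le> i \<and> i \<le> k \<and> j < k \<and> (i,j) \<in> S}
   \<union> {(Q j e, Q j (Suc e)) | j e. j < k \<and> e < b}
   \<union> {(Q j e, H) | j e. j < k \<and> e \<le> b}
   \<union> {(B2 j, Q j 0) | j. j < k} \<union> {(B2 j, H) | j. j < k}
   \<union> {(H, W t) | t. (k+1)*a + k*(b+1) + k \<le> t \<and> t < n}
   \<union> {(W t, H) | t. (k+1)*a + k*(b+1) + k \<le> t \<and> t < n}"

definition Eset :: "nat \<Rightarrow> nat \<Rightarrow> nat \<Rightarrow> nat \<Rightarrow> (nat\<times>nat) set \<Rightarrow> (nat\<times>nat) set \<Rightarrow> (nat\<times>nat) set" where
  "Eset k a b n S X = map_prod (code k a b) (code k a b) ` Rel k a b n S X"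

lemma a0_valid: "1 \<le> a \<Longrightarrow> valid k a b n (a0 a)"
  by (auto simp: a0_def)

lemma Rel_valid: "(u,v) \<in> Rel k a b n S X \<Longrightarrow> 1 \<le> a \<Longrightarrow> valid k a b n u \<and> valid k a b n v"
  unfolding Rel_def using a0_valid[of a k b n] by auto

lemma Eset_relpow: "(u,v) \<in> (Rel k a b n S X)^^l \<Longrightarrow> (code k a b u, code k a b v) \<in> (Eset k a b n S X)^^l"
proof (induction l arbitrary: v)
  case 0 then show ?case by simp
next
  case (Suc l)
  then obtain z where "(u,z) \<in> (Rel k a b n S X)^^l" "(z,v) \<in> Rel k a b n S X" by (auto elim: relpow_Suc_E)
  moreover have "(code k a b z, code k a b v) \<in> Eset k a b n S X"
    using calculation(2) unfolding Eset_def by force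
  ultimately show ?case using Suc.IH by (auto intro: relpow_Suc_I)
qed

fun psi1 :: "nat \<Rightarrow> vx \<Rightarrow> int" where
  "psi1 a H = 0"
| "psi1 a (P i d) = int d"
| "psi1 a (Q j e) = (if j = 0 then int e - 1 else int a + int e)"
| "psi1 a (B2 j) = int a"
| "psi1 a (W t) = 1"

fun psi2 :: "nat \<Rightarrow> nat \<Rightarrow> nat \<Rightarrow> vx \<Rightarrow> int" where
  "psi2 a i0 j0 H = 0"
| "psi2 a i0 j0 (P i d) = (if i = i0 then int d - int a - 2 else int d)"
| "psi2 a i0 j0 (Q j e) = (if j = j0 then int a + int e else int e - 1)"
| "psi2 a i0 j0 (B2 j) = (if j = j0 then int a else -1)"
| "psi2 a i0 j0 (W t) = 1"

lemma psi1_edge: "(u,v) \<in> Rel k a b n S X \<Longrightarrow> 1 \<le> a \<Longrightarrow> psi1 a v \<le> psi1 a u + 1"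
  unfolding Rel_def a0_def by (auto split: if_splits)

lemma psi2_edge: "(u,v) \<in> Rel k a b n S X \<Longrightarrow> 1 \<le> a \<Longrightarrow> (i0,j0) \<in> X \<Longrightarrow> (i0,j0) \<notin> S \<Longrightarrow> 1 \<le> i0
   \<Longrightarrow> psi2 a i0 j0 v \<le> psi2 a i0 j0 u + 1"
  unfolding Rel_def a0_def by (auto split: if_splits)


locale cons =
  fixes k a b n :: nat and S X :: "(nat\<times>nat) set"
  assumes k2: "2 \<le> k" and a1: "1 \<le> a" and ab: "a \<le> b" and nN: "(k+1)*a + k*(b+1) + k \<le> n"
    and Xi: "\<And>i j. (i,j) \<in> X \<Longrightarrow> 1 \<le> i" and Xs: "\<And>x y. x \<in> X \<Longrightarrow> y \<in> X \<Longrightarrow> x = y"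
begin

abbreviation "R \<equiv> Rel k a b n S X"

definition reach where "reach u v l \<longleftrightarrow> (\<exists>l'\<le>l. (u,v) \<in> R^^l')"

lemma reach_refl: "reach u u 0"
  unfolding reach_def by auto

lemma reach_edge: "(u,v) \<in> R \<Longrightarrow> reach u v 1"
  unfolding reach_def by (rule exI[of _ 1]) auto

lemma reach_trans: "reach u v l1 \<Longrightarrow> reach v w l2 \<Longrightarrow> reach u w (l1+l2)"
proof -
  assume "reach u v l1" "reach v w l2"
  then obtain m1 m2 where "m1 \<le> l1" "m2 \<le> l2" "(u,v) \<in> R^^m1" "(v,w) \<in> R^^m2"
    unfolding reach_def by blast
  then have "(u,w) \<in> R^^(m1+m2)" by (auto simp: relpow_add)
  then show ?thesis unfolding reach_def using \<open>m1 \<le> l1\<close> \<open>m2 \<le> l2\<close> by (intro exI[of _ "m1+m2"]) auto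
qed

lemma reach_mono: "reach u v l \<Longrightarrow> l \<le> l' \<Longrightarrow> reach u v l'"
  unfolding reach_def using le_trans by blast

lemma reach_trans': "reach u v l1 \<Longrightarrow> reach v w l2 \<Longrightarrow> l1 + l2 \<le> l \<Longrightarrow> reach u w l"
  using reach_trans reach_mono by blast

lemma reach_edge_trans: "(u,v) \<in> R \<Longrightarrow> reach v w l \<Longrightarrow> reach u w (Suc l)"
  using reach_trans[OF reach_edge] by simp

lemma chainP: assumes "1 \<le> i" "i \<le> k" "1 \<le> d" "d \<le> d'" "d' \<le> a" shows "reach (P i d) (P i d') (d'-d)"
  using assms(4,5)
proof (induction d' rule: dec_induct)
  case base then show ?case by (simp add: reach_refl)
next
  case (step m)
  have "(P i m, P i (Suc m)) \<in> R" using step assms unfolding Rel_def by auto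
  then have "reach (P i m) (P i (Suc m)) 1" by (rule reach_edge)
  then show ?case using step reach_trans[of "P i d" "P i m" "m - d" "P i (Suc m)" 1]
    by (simp add: Suc_diff_le)
qed

lemma chainP0: assumes "1 \<le> d" "d \<le> d'" "d' < a" shows "reach (P 0 d) (P 0 d') (d'-d)"
  using assms(2,3)
proof (induction d' rule: dec_induct)
  case base then show ?case by (simp add: reach_refl)
next
  case (step m)
  have "(P 0 m, P 0 (Suc m)) \<in> R" using step assms unfolding Rel_def by auto
  then have "reach (P 0 m) (P 0 (Suc m)) 1" by (rule reach_edge)
  then show ?case using step reach_trans[of "P 0 d" "P 0 m" "m - d" "P 0 (Suc m)" 1]
    by (simp add: Suc_diff_le)
qed

lemma chainQ: assumes "j < k" "e \<le> e'" "e' \<le> b" shows "reach (Q j e) (Q j e') (e'-e)"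
  using assms(2,3)
proof (induction e' rule: dec_induct)
  case base then show ?case by (simp add: reach_refl)
next
  case (step m)
  have "(Q j m, Q j (Suc m)) \<in> R" using step assms unfolding Rel_def by auto
  then have "reach (Q j m) (Q j (Suc m)) 1" by (rule reach_edge)
  then show ?case using step reach_trans[of "Q j e" "Q j m" "m - e" "Q j (Suc m)" 1]
    by (simp add: Suc_diff_le)
qed

lemma H_P: "1 \<le> i \<Longrightarrow> i \<le> k \<Longrightarrow> 1 \<le> d \<Longrightarrow> d \<le> a \<Longrightarrow> reach H (P i d) d"
proof -
  assume h: "1 \<le> i" "i \<le> k" "1 \<le> d" "d \<le> a"
  have "(H, P i 1) \<in> R" using h unfolding Rel_def by auto
  moreover have "reach (P i 1) (P i d) (d - 1)" using chainP h by simp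
  ultimately show ?thesis using reach_edge_trans h by fastforce
qed

lemma H_P0: "1 \<le> d \<Longrightarrow> d < a \<Longrightarrow> reach H (P 0 d) d"
proof -
  assume h: "1 \<le> d" "d < a"
  have "(H, P 0 1) \<in> R" using h unfolding Rel_def by auto
  moreover have "reach (P 0 1) (P 0 d) (d - 1)" using chainP0 h by simp
  ultimately show ?thesis using reach_edge_trans h by fastforce
qed

lemma H_a0: "reach H (a0 a) (a - 1)"
proof (cases "a = 1")
  case True
  then have "a0 a = H" "a - 1 = 0" by (auto simp: a0_def)
  then show ?thesis by (simp only: reach_refl)
next
  case False
  then have "a0 a = P 0 (a - 1)" by (auto simp: a0_def)
  then show ?thesis using H_P0[of "a-1"] a1 False by simp
qed

lemma a0_Q: "j < k \<Longrightarrow> (a0 a, Q j 0) \<in> R"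
  unfolding Rel_def by auto

lemma a0_B2: "j < k \<Longrightarrow> (a0 a, B2 j) \<in> R"
  unfolding Rel_def by auto

lemma H_Q: "j < k \<Longrightarrow> e \<le> b \<Longrightarrow> reach H (Q j e) (a + e)"
proof -
  assume h: "j < k" "e \<le> b"
  have "reach (a0 a) (Q j e) (Suc e)" using reach_edge_trans[OF a0_Q[OF h(1)] chainQ[OF h(1), of 0 e]] h by simp
  then show ?thesis using reach_trans[OF H_a0] a1 by fastforce
qed

lemma H_B2: "j < k \<Longrightarrow> reach H (B2 j) a"
  using reach_trans[OF H_a0 reach_edge[OF a0_B2]] a1 by simp

lemma H_W: "valid k a b n (W t) \<Longrightarrow> reach H (W t) 1"
  by (rule reach_edge) (auto simp: Rel_def)

lemma from_h: assumes "valid k a b n v" shows "reach H v (a+b)"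
proof (cases v)
  case H then show ?thesis using reach_refl reach_mono by blast
next
  case (P i d)
  from assms show ?thesis using P H_P[of i d] H_P0[of d] reach_mono by (cases "i = 0") auto
next
  case (Q j e)
  from assms show ?thesis using Q H_Q[of j e] reach_mono by auto
next
  case (B2 j)
  from assms show ?thesis using B2 H_B2[of j] reach_mono by auto
next
  case (W t)
  from assms show ?thesis using W H_W[of t] reach_mono a1 by auto
qed

lemma from_h_small: assumes "valid k a b n v" "\<And>j e. v \<noteq> Q j e" "\<And>j. v \<noteq> B2 j" shows "reach H v a"
proof (cases v)
  case H then show ?thesis using reach_refl reach_mono by blast
next
  case (P i d)
  from assms show ?thesis using P H_P[of i d] H_P0[of d] reach_mono by (cases "i = 0") auto
next
  case (W t)
  from assms show ?thesis using W H_W[of t] reach_mono a1 by auto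
qed (use assms in auto)

lemma Q_H: "j < k \<Longrightarrow> e \<le> b \<Longrightarrow> reach (Q j e) H 1"
  by (rule reach_edge) (auto simp: Rel_def)

lemma B2_H: "j < k \<Longrightarrow> reach (B2 j) H 1"
  by (rule reach_edge) (auto simp: Rel_def)

lemma W_H: "valid k a b n (W t) \<Longrightarrow> reach (W t) H 1"
  by (rule reach_edge) (auto simp: Rel_def)

lemma free_col: "\<exists>j. j < k \<and> (i,j) \<notin> X"
proof (cases "(i,0) \<in> X")
  case True
  then have "(i,1) \<notin> X" using Xs[of "(i,0)" "(i,1)"] by auto
  then show ?thesis using k2 by (intro exI[of _ 1]) auto
next
  case False
  then show ?thesis using k2 by (intro exI[of _ 0]) auto
qed

lemma Pi_H: "1 \<le> i \<Longrightarrow> i \<le> k \<Longrightarrow> 1 \<le> d \<Longrightarrow> d \<le> a \<Longrightarrow> reach (P i d) H (a+1)"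
proof -
  assume h: "1 \<le> i" "i \<le> k" "1 \<le> d" "d \<le> a"
  obtain j where j: "j < k" "(i,j) \<notin> X" using free_col by blast
  have e1: "(P i a, Q j 0) \<in> R" using h j unfolding Rel_def by auto
  have "reach (P i a) H (Suc (Suc 0))" using reach_edge_trans[OF e1 Q_H[OF j(1), of 0]] by simp
  then show ?thesis using reach_trans'[OF chainP[of i d a]] h by simp
qed

lemma P0_a0: "1 \<le> d \<Longrightarrow> d < a \<Longrightarrow> reach (P 0 d) (a0 a) (a - 1 - d)"
proof -
  assume h: "1 \<le> d" "d < a"
  then have "a0 a = P 0 (a - 1)" by (auto simp: a0_def)
  then show ?thesis using chainP0[of d "a-1"] h by simp
qed

lemma P0_H: "1 \<le> d \<Longrightarrow> d < a \<Longrightarrow> reach (P 0 d) H a"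
proof -
  assume h: "1 \<le> d" "d < a"
  have k0: "0 < k" using k2 by simp
  have "reach (a0 a) H (Suc (Suc 0))" using reach_edge_trans[OF a0_Q[OF k0] Q_H[OF k0, of 0]] by simp
  then show ?thesis using reach_trans'[OF P0_a0] h by simp
qed

lemma to_h: assumes "valid k a b n u" shows "reach u H (a+1)"
proof (cases u)
  case H then show ?thesis using reach_refl reach_mono by blast
next
  case (P i d)
  from assms show ?thesis using P Pi_H[of i d] P0_H[of d] reach_mono by (cases "i = 0") auto
next
  case (Q j e)
  from assms show ?thesis using Q Q_H[of j e] reach_mono by auto
next
  case (B2 j)
  from assms show ?thesis using B2 B2_H[of j] reach_mono by auto
next
  case (W t)
  from assms show ?thesis using W W_H[of t] reach_mono by auto
qed

lemma Pi_Q: "1 \<le> i \<Longrightarrow> i \<le> k \<Longrightarrow> 1 \<le> d \<Longrightarrow> d \<le> a \<Longrightarrow> j < k \<Longrightarrow> e \<le> b \<Longrightarrow> (i,j) \<notin> X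
   \<Longrightarrow> reach (P i d) (Q j e) (a+b)"
proof -
  assume h: "1 \<le> i" "i \<le> k" "1 \<le> d" "d \<le> a" "j < k" "e \<le> b" "(i,j) \<notin> X"
  have e1: "(P i a, Q j 0) \<in> R" using h unfolding Rel_def by auto
  have "reach (P i a) (Q j e) (Suc e)" using reach_edge_trans[OF e1 chainQ[of j 0 e]] h by simp
  then show ?thesis using reach_trans'[OF chainP[of i d a]] h by simp
qed

lemma Pi_Q_S: "1 \<le> i \<Longrightarrow> i \<le> k \<Longrightarrow> 1 \<le> d \<Longrightarrow> d \<le> a \<Longrightarrow> j < k \<Longrightarrow> e \<le> b \<Longrightarrow> (i,j) \<in> S
   \<Longrightarrow> reach (P i d) (Q j e) (a+b+1)"
proof -
  assume h: "1 \<le> i" "i \<le> k" "1 \<le> d" "d \<le> a" "j < k" "e \<le> b" "(i,j) \<in> S"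
  have e1: "(P i a, B2 j) \<in> R" using h unfolding Rel_def by auto
  have e2: "(B2 j, Q j 0) \<in> R" using h unfolding Rel_def by auto
  have "reach (P i a) (Q j e) (Suc (Suc e))" using reach_edge_trans[OF e1 reach_edge_trans[OF e2 chainQ[of j 0 e]]] h by simp
  then show ?thesis using reach_trans'[OF chainP[of i d a]] h by simp
qed

lemma P0_Q: "1 \<le> d \<Longrightarrow> d < a \<Longrightarrow> j < k \<Longrightarrow> e \<le> b \<Longrightarrow> reach (P 0 d) (Q j e) (a+b)"
proof -
  assume h: "1 \<le> d" "d < a" "j < k" "e \<le> b"
  have "reach (a0 a) (Q j e) (Suc e)" using reach_edge_trans[OF a0_Q chainQ[of j 0 e]] h by simp
  then show ?thesis using reach_trans'[OF P0_a0] h by simp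
qed

lemma P0_B2: "1 \<le> d \<Longrightarrow> d < a \<Longrightarrow> j < k \<Longrightarrow> reach (P 0 d) (B2 j) a"
  using reach_trans'[OF P0_a0 reach_edge[OF a0_B2]] by simp

lemma upper_T: "valid k a b n u \<Longrightarrow> valid k a b n v \<Longrightarrow> reach u v (2*a+b+1)"
  using reach_trans'[OF to_h from_h] by simp

lemma upper_D:
  assumes XS: "X \<subseteq> S" and u: "valid k a b n u" and v: "valid k a b n v"
  shows "reach u v (a+b+1)"
proof (cases u)
  case H then show ?thesis using from_h[OF v] reach_mono by simp
next
  case (Q j e)
  then show ?thesis using reach_trans'[OF Q_H from_h[OF v]] u by auto
next
  case (B2 j)
  then show ?thesis using reach_trans'[OF B2_H from_h[OF v]] u by auto
next
  case (W t)
  then show ?thesis using reach_trans'[OF W_H from_h[OF v]] u by auto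
next
  case (P i d)
  show ?thesis
  proof (cases "i = 0")
    case True
    then have h: "1 \<le> d" "d < a" using u P by auto
    show ?thesis
    proof (cases "(\<exists>j e. v = Q j e) \<or> (\<exists>j. v = B2 j)")
      case True
      then show ?thesis
      proof (elim disjE exE)
        fix j e assume v': "v = Q j e"
        then have "j < k" "e \<le> b" using v by auto
        then show ?thesis using reach_mono[OF P0_Q[OF h \<open>j < k\<close> \<open>e \<le> b\<close>], of "a+b+1"] v' P \<open>i = 0\<close> by simp
      next
        fix j assume v': "v = B2 j"
        then have "j < k" using v by auto
        then show ?thesis using reach_mono[OF P0_B2[OF h \<open>j < k\<close>], of "a+b+1"] v' P \<open>i = 0\<close> ab by simp
      qed
    next
      case False
      then have "reach H v a" using from_h_small[OF v] by blast
      then show ?thesis using reach_trans'[OF P0_H[OF h]] P \<open>i = 0\<close> ab by auto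
    qed
  next
    case False
    then have h: "1 \<le> i" "i \<le> k" "1 \<le> d" "d \<le> a" using u P by auto
    show ?thesis
    proof (cases "\<exists>j e. v = Q j e")
      case True
      then obtain j e where v': "v = Q j e" by blast
      then have je: "j < k" "e \<le> b" using v by auto
      show ?thesis
      proof (cases "(i,j) \<in> X")
        case True
        then show ?thesis using Pi_Q_S[OF h je] XS P v' by auto
      next
        case False
        then show ?thesis using Pi_Q[OF h je] P v' reach_mono by auto
      qed
    next
      case nq: False
      show ?thesis
      proof (cases "\<exists>j. v = B2 j")
        case True
        then obtain j where "v = B2 j" by blast
        then show ?thesis using reach_trans'[OF Pi_H[OF h] H_B2] P v ab by auto
      next
        case False
        then have "reach H v a" using from_h_small[OF v] nq by blast
        then show ?thesis using reach_trans'[OF Pi_H[OF h]] P ab by auto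
      qed
    qed
  qed
qed


lemma dist_upper:
  assumes up: "\<And>u v. valid k a b n u \<Longrightarrow> valid k a b n v \<Longrightarrow> reach u v L"
    and st: "s < n" "t < n"
  shows "dist (Eset k a b n S X) s t \<le> enat L"
proof -
  have cs: "valid k a b n (decode k a b s)" "code k a b (decode k a b s) = s"
    using code_decode[OF st(1) a1 nN] by auto
  have ct: "valid k a b n (decode k a b t)" "code k a b (decode k a b t) = t"
    using code_decode[OF st(2) a1 nN] by auto
  obtain l where l: "l \<le> L" "(decode k a b s, decode k a b t) \<in> R^^l"
    using up[OF cs(1) ct(1)] unfolding reach_def by blast
  have "(s, t) \<in> (Eset k a b n S X)^^l" using Eset_relpow[OF l(2)] cs ct by simp
  then have "dist (Eset k a b n S X) s t \<le> enat l" by (rule dist_le)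
  then show ?thesis using l(1) order_trans by fastforce
qed

lemma pot_E:
  assumes "\<And>u v. (u,v) \<in> R \<Longrightarrow> \<phi> v \<le> \<phi> u + (1::int)"
  shows "\<And>x y. (x,y) \<in> Eset k a b n S X \<Longrightarrow> (\<phi> \<circ> decode k a b) y \<le> (\<phi> \<circ> decode k a b) x + 1"
proof -
  fix x y assume "(x,y) \<in> Eset k a b n S X"
  then obtain u v where uv: "(u,v) \<in> R" "x = code k a b u" "y = code k a b v"
    unfolding Eset_def by auto
  have "valid k a b n u" "valid k a b n v" using Rel_valid[OF uv(1) a1] by auto
  then have "decode k a b x = u" "decode k a b y = v" using uv decode_code a1 by auto
  then show "(\<phi> \<circ> decode k a b) y \<le> (\<phi> \<circ> decode k a b) x + 1" using assms[OF uv(1)] by simp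
qed

lemma diam_D:
  assumes XS: "X \<subseteq> S"
  shows "diam n (Eset k a b n S X) = enat (a+b+1)"
proof (rule diam_eq)
  show "\<And>s t. s < n \<Longrightarrow> t < n \<Longrightarrow> dist (Eset k a b n S X) s t \<le> enat (a+b+1)"
    using dist_upper upper_D[OF XS] by blast
  have v1: "valid k a b n (Q 0 0)" "valid k a b n (Q 1 b)" using k2 by auto
  show "code k a b (Q 0 0) < n" by (rule code_lt[OF v1(1) nN a1])
  show "code k a b (Q 1 b) < n" by (rule code_lt[OF v1(2) nN a1])
  have "\<And>x y. (x,y) \<in> Eset k a b n S X \<Longrightarrow> (psi1 a \<circ> decode k a b) y \<le> (psi1 a \<circ> decode k a b) x + 1"
    by (rule pot_E) (rule psi1_edge[OF _ a1])
  moreover have "int (a+b+1) \<le> (psi1 a \<circ> decode k a b) (code k a b (Q 1 b)) - (psi1 a \<circ> decode k a b) (code k a b (Q 0 0))"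
    using decode_code[OF v1(1) a1] decode_code[OF v1(2) a1] by simp
  ultimately show "enat (a+b+1) \<le> dist (Eset k a b n S X) (code k a b (Q 0 0)) (code k a b (Q 1 b))"
    by (rule dist_ge)
qed

lemma diam_T:
  assumes iX: "(i0,j0) \<in> X" and iS: "(i0,j0) \<notin> S" and ik: "i0 \<le> k" and jk: "j0 < k"
  shows "diam n (Eset k a b n S X) = enat (2*a+b+1)"
proof (rule diam_eq)
  show "\<And>s t. s < n \<Longrightarrow> t < n \<Longrightarrow> dist (Eset k a b n S X) s t \<le> enat (2*a+b+1)"
    using dist_upper upper_T by blast
  have i1: "1 \<le> i0" using Xi[OF iX] .
  have v1: "valid k a b n (P i0 1)" "valid k a b n (Q j0 b)" using i1 ik jk a1 by auto
  show "code k a b (P i0 1) < n" by (rule code_lt[OF v1(1) nN a1])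
  show "code k a b (Q j0 b) < n" by (rule code_lt[OF v1(2) nN a1])
  have "\<And>x y. (x,y) \<in> Eset k a b n S X \<Longrightarrow> (psi2 a i0 j0 \<circ> decode k a b) y \<le> (psi2 a i0 j0 \<circ> decode k a b) x + 1"
    by (rule pot_E) (rule psi2_edge[OF _ a1 iX iS i1])
  moreover have "int (2*a+b+1) \<le> (psi2 a i0 j0 \<circ> decode k a b) (code k a b (Q j0 b)) - (psi2 a i0 j0 \<circ> decode k a b) (code k a b (P i0 1))"
    using decode_code[OF v1(1) a1] decode_code[OF v1(2) a1] by simp
  ultimately show "enat (2*a+b+1) \<le> dist (Eset k a b n S X) (code k a b (P i0 1)) (code k a b (Q j0 b))"
    by (rule dist_ge)
qed

end

lemma valid_in_decode: "valid k a b n v \<Longrightarrow> 1 \<le> a \<Longrightarrow> (k+1)*a + k*(b+1) + k \<le> n \<Longrightarrow> v \<in> decode k a b ` {..<n}"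
  using decode_code[of k a b n v] code_lt[of k a b n v] by (metis imageI lessThan_iff)

lemma Rel_sub_valid: "1 \<le> a \<Longrightarrow> (k+1)*a + k*(b+1) + k \<le> n \<Longrightarrow> Rel k a b n S X \<subseteq> decode k a b ` {..<n} \<times> decode k a b ` {..<n}"
  using Rel_valid valid_in_decode by fastforce

lemma finite_Rel: "1 \<le> a \<Longrightarrow> (k+1)*a + k*(b+1) + k \<le> n \<Longrightarrow> finite (Rel k a b n S X)"
  using Rel_sub_valid by (metis finite_SigmaI finite_imageI finite_lessThan finite_subset)

lemma inj_code: "1 \<le> a \<Longrightarrow> inj_on (map_prod (code k a b) (code k a b)) {(u,v). valid k a b n u \<and> valid k a b n v}"
  unfolding inj_on_def by (auto dest: arg_cong[where f="decode k a b"] simp: decode_code)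

lemma Rel_irrefl: "(u,u) \<notin> Rel k a b n S X"
  unfolding Rel_def a0_def by auto

lemma is_digraph_E:
  assumes "1 \<le> a" "(k+1)*a + k*(b+1) + k \<le> n"
  shows "is_digraph n (Eset k a b n S X)"
  unfolding is_digraph_def
proof
  show "Eset k a b n S X \<subseteq> {0..<n} \<times> {0..<n}"
    unfolding Eset_def using Rel_valid[OF _ assms(1)] code_lt[OF _ assms(2,1)] by fastforce
  show "\<forall>v. (v, v) \<notin> Eset k a b n S X"
  proof (intro allI notI)
    fix x assume "(x,x) \<in> Eset k a b n S X"
    then obtain u v where uv: "(u,v) \<in> Rel k a b n S X" "code k a b u = x" "code k a b v = x"
      unfolding Eset_def by auto
    have "valid k a b n u" "valid k a b n v" using Rel_valid[OF uv(1) assms(1)] by auto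
    then have "u = v" using uv decode_code[OF _ assms(1)] by metis
    then show False using uv(1) Rel_irrefl by metis
  qed
qed


lemma Rel_remove: "1 \<le> i \<Longrightarrow> Rel k a b n S {(i,j)} = Rel k a b n S {} - {(P i a, Q j 0)}"
  unfolding Rel_def a0_def by auto

lemma Eset_remove:
  assumes a1: "1 \<le> a" and nN: "(k+1)*a + k*(b+1) + k \<le> n" and ij: "1 \<le> i" "i \<le> k" "j < k"
  shows "Eset k a b n S {} - {(code k a b (P i a), code k a b (Q j 0))} = Eset k a b n S {(i,j)}"
proof -
  let ?C = "{(u,v). valid k a b n u \<and> valid k a b n v}"
  let ?f = "map_prod (code k a b) (code k a b)"
  have "Rel k a b n S {} - {(P i a, Q j 0)} \<subseteq> ?C" using Rel_valid[OF _ a1] by blast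
  moreover have "{(P i a, Q j 0)} \<subseteq> ?C" using ij a1 by auto
  ultimately have "?f ` (Rel k a b n S {} - {(P i a, Q j 0)}) = ?f ` Rel k a b n S {} - ?f ` {(P i a, Q j 0)}"
    by (rule inj_on_image_set_diff[OF inj_code[OF a1]])
  then show ?thesis unfolding Eset_def Rel_remove[OF ij(1)] by simp
qed

lemma cross_in: "1 \<le> i \<Longrightarrow> i \<le> k \<Longrightarrow> j < k \<Longrightarrow> (i,j) \<notin> X \<Longrightarrow> (P i a, Q j 0) \<in> Rel k a b n S X"
  unfolding Rel_def by blast

lemma edge_in: "1 \<le> i \<Longrightarrow> i \<le> k \<Longrightarrow> j < k \<Longrightarrow> (code k a b (P i a), code k a b (Q j 0)) \<in> Eset k a b n S {}"
  unfolding Eset_def by (rule image_eqI[of _ _ "(P i a, Q j 0)"]) (auto intro: cross_in)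

lemma card_lower:
  assumes a1: "1 \<le> a" and nN: "(k+1)*a + k*(b+1) + k \<le> n"
  shows "k*k \<le> card (Eset k a b n S {})"
proof -
  let ?C0 = "(\<lambda>(i,j). (P i a, Q j 0)) ` ({1..k} \<times> {..<k})"
  let ?f = "map_prod (code k a b) (code k a b)"
  have c0: "card ?C0 = k*k"
    by (subst card_image) (auto simp: inj_on_def card_cartesian_product)
  have sub: "?C0 \<subseteq> Rel k a b n S {}" using cross_in[of _ k _ "{}"] by auto
  have "inj_on ?f ?C0"
    by (rule inj_on_subset[OF inj_code[OF a1]]) (use a1 in auto)
  then have "card (?f ` ?C0) = k*k" using c0 by (simp add: card_image)
  moreover have "?f ` ?C0 \<subseteq> Eset k a b n S {}" unfolding Eset_def using sub by blast
  moreover have "finite (Eset k a b n S {})" unfolding Eset_def using finite_Rel[OF a1 nN] by blast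
  ultimately show ?thesis using card_mono by metis
qed

fun succ :: "vx \<Rightarrow> vx" where
  "succ (P i d) = P i (Suc d)"
| "succ (Q j e) = Q j (Suc e)"
| "succ (B2 j) = Q j 0"
| "succ _ = H"

lemma card_upper:
  assumes a1: "1 \<le> a" and nN: "(k+1)*a + k*(b+1) + k \<le> n"
  shows "card (Eset k a b n S X) \<le> 4*n + 2*(k*k)"
proof -
  let ?V = "decode k a b ` {..<n}"
  let ?C0 = "(\<lambda>(i,j). (P i a, Q j 0)) ` ({1..k} \<times> {..<k})"
  let ?C1 = "(\<lambda>(i,j). (P i a, B2 j)) ` ({1..k} \<times> {..<k})"
  let ?U1 = "(\<lambda>u. (u, H)) ` ?V"
  let ?U2 = "(\<lambda>u. (u, succ u)) ` ?V"
  let ?U3 = "(\<lambda>v. (H, v)) ` ?V"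
  let ?U4 = "(\<lambda>v. (a0 a, v)) ` ?V"
  have V: "card ?V \<le> n" using card_image_le[of "{..<n}" "decode k a b"] by simp
  have cV: "\<And>f :: vx \<Rightarrow> vx \<times> vx. card (f ` ?V) \<le> n" using V card_image_le order_trans by blast
  have cC: "card ?C0 \<le> k*k" "card ?C1 \<le> k*k"
    using card_image_le[of "{1..k} \<times> {..<k}"] by (auto simp: card_cartesian_product)
  have inV: "\<And>v. valid k a b n v \<Longrightarrow> v \<in> ?V" using valid_in_decode[OF _ a1 nN] by blast
  have sub: "Rel k a b n S X \<subseteq> ?U1 \<union> ?U2 \<union> ?U3 \<union> ?U4 \<union> ?C0 \<union> ?C1"
  proof
    fix x assume x: "x \<in> Rel k a b n S X"
    obtain u v where uv: "x = (u,v)" by (cases x)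
    have vu: "u \<in> ?V" "v \<in> ?V" using Rel_valid[OF x[unfolded uv] a1] inV by auto
    have m0: "\<And>i j. 1 \<le> i \<Longrightarrow> i \<le> k \<Longrightarrow> j < k \<Longrightarrow> (P i a, Q j 0) \<in> ?C0"
      by (rule image_eqI) auto
    have m1: "\<And>i j. 1 \<le> i \<Longrightarrow> i \<le> k \<Longrightarrow> j < k \<Longrightarrow> (P i a, B2 j) \<in> ?C1"
      by (rule image_eqI) auto
    have "(u,v) \<in> ?U1 \<union> ?U2 \<union> ?U3 \<union> ?U4 \<union> ?C0 \<union> ?C1"
      using x[unfolded uv] vu m0 m1 unfolding Rel_def by auto
    then show "x \<in> ?U1 \<union> ?U2 \<union> ?U3 \<union> ?U4 \<union> ?C0 \<union> ?C1" using uv by simp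
  qed
  have fin: "finite (?U1 \<union> ?U2 \<union> ?U3 \<union> ?U4 \<union> ?C0 \<union> ?C1)" by auto
  have "card (Rel k a b n S X) \<le> card (?U1 \<union> ?U2 \<union> ?U3 \<union> ?U4 \<union> ?C0 \<union> ?C1)"
    by (rule card_mono[OF fin sub])
  also have "\<dots> \<le> card ?U1 + card ?U2 + card ?U3 + card ?U4 + card ?C0 + card ?C1"
    by (meson card_Un_le add_right_mono order_trans)
  also have "\<dots> \<le> 4*n + 2*(k*k)" using cV[of "\<lambda>u. (u, H)"] cV[of "\<lambda>u. (u, succ u)"] cV[of "\<lambda>v. (H, v)"] cV[of "\<lambda>v. (a0 a, v)"] cC by linarith
  finally have "card (Rel k a b n S X) \<le> 4*n + 2*(k*k)" .
  moreover have "card (Eset k a b n S X) \<le> card (Rel k a b n S X)" unfolding Eset_def by (rule card_image_le[OF finite_Rel[OF a1 nN]])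
  ultimately show ?thesis by linarith
qed

lemma card_short_lists: "card {xs :: bool list. length xs < K} + 1 \<le> 2^K"
proof (induction K)
  case 0 then show ?case by simp
next
  case (Suc K)
  have eq: "{xs :: bool list. length xs < Suc K} = {xs. length xs < K} \<union> {xs. length xs = K}" by auto
  have f1: "finite {xs :: bool list. length xs < K}"
    by (rule finite_subset[OF _ finite_lists_length_le[of "UNIV :: bool set" K]]) auto
  have f2: "finite {xs :: bool list. length xs = K}" using finite_lists_length_eq[of "UNIV :: bool set" K] by simp
  have c2: "card {xs :: bool list. length xs = K} = 2^K" using card_lists_length_eq[of "UNIV :: bool set" K] by simp
  have "card {xs :: bool list. length xs < Suc K} \<le> card {xs :: bool list. length xs < K} + card {xs :: bool list. length xs = K}"
    unfolding eq by (rule card_Un_le)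
  then show ?case using Suc.IH c2 by simp
qed




lemma construction:
  fixes n m D :: nat
  assumes h1: "m \<le> n^2" and h2: "n \<le> m" and h3: "4 \<le> n" and h4: "real n / sqrt (real m) > real D" and h5: "3 \<le> D"
  shows "\<exists>F :: (nat \<times> nat) set set.
         (\<forall>E \<in> F. is_digraph n E \<and> diam n E = enat D \<and>
                   1/8 * real m \<le> real (card E) \<and> real (card E) \<le> 7 * real m) \<and>
         (\<forall>(enc :: (nat \<times> nat) set \<Rightarrow> bool list) (q :: bool list \<Rightarrow> nat \<times> nat \<Rightarrow> bool).
            (\<forall>E \<in> F. \<forall>e \<in> E.
               (diam n (E - {e}) = enat D \<longrightarrow> q (enc E) e) \<and>
               (diam n (E - {e}) = enat (fd_target D) \<longrightarrow> \<not> q (enc E) e))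
            \<longrightarrow> (\<exists>E \<in> F. 1/8 * real m \<le> real (length (enc E))))"
proof -
  define s where "s = nat \<lfloor>sqrt (real m)\<rfloor>"
  have m0: "0 < m" using h2 h3 by simp
  have sq: "0 < sqrt (real m)" using m0 by simp
  have sqsq: "sqrt (real m) * sqrt (real m) = real m" by simp
  have DS: "real D * sqrt (real m) < real n" using h4 sq by (simp add: less_divide_eq)
  have "3 * sqrt (real m) < sqrt (real m) * sqrt (real m)"
  proof -
    have "3 * sqrt (real m) \<le> real D * sqrt (real m)" using h5 sq by (intro mult_right_mono) auto
    also have "\<dots> < real n" by (rule DS)
    also have "\<dots> \<le> real m" using h2 by simp
    finally show ?thesis using sqsq by simp
  qed
  then have sm3: "3 < sqrt (real m)" using mult_less_cancel_right_pos[OF sq, of 3 "sqrt (real m)"] by blast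
  have fl0: "0 \<le> \<lfloor>sqrt (real m)\<rfloor>" using sq by simp
  have rs: "real s = of_int \<lfloor>sqrt (real m)\<rfloor>" unfolding s_def using fl0 by simp
  have s_le: "real s \<le> sqrt (real m)" using rs by simp
  have s_gt: "sqrt (real m) < real s + 1" using rs by linarith
  have s3: "3 \<le> s" using sm3 rs by linarith
  have sm: "s*s \<le> m"
  proof -
    have "real s * real s \<le> sqrt (real m) * sqrt (real m)" using s_le by (intro mult_mono) auto
    then have "real (s*s) \<le> real m" using sqsq by simp
    then show ?thesis by (simp only: of_nat_le_iff)
  qed
  have ms: "m < (s+1)*(s+1)"
  proof -
    have "sqrt (real m) * sqrt (real m) < (real s + 1) * (real s + 1)" using s_gt sq by (intro mult_strict_mono) auto
    then have "real m < real ((s+1)*(s+1))" using sqsq by (simp add: algebra_simps)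
    then show ?thesis by (simp only: of_nat_less_iff)
  qed
  have Ds: "D * s < n"
  proof -
    have "real D * real s \<le> real D * sqrt (real m)" using s_le by (intro mult_left_mono) auto
    then have "real (D * s) < real n" using DS by simp
    then show ?thesis by linarith
  qed
  define k where "k = (s+1) div 2"
  have k2: "2 \<le> k" "k \<le> s" "s \<le> 2*k" "2*k \<le> s+1" using s3 unfolding k_def by presburger+
  define a where "a = (D-1) div 2"
  define b where "b = D - a - 1"
  have a1: "1 \<le> a" using h5 unfolding a_def by presburger
  have ab: "a \<le> b" using h5 unfolding a_def b_def by presburger
  have Dab: "D = a+b+1" using h5 unfolding a_def b_def by presburger
  have a2: "2*a \<le> D - 1" unfolding a_def by presburger
  have fdT: "fd_target D = 2*a+b+1"
  proof (cases "odd D")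
    case True
    then obtain t where t: "D = 2*t+1" by (metis oddE)
    then have "a = t" "b = t" unfolding a_def b_def by auto
    then show ?thesis unfolding fd_target_def using True t by simp
  next
    case False
    then obtain t where t: "D = 2*t" by (metis evenE)
    then have "a = t - 1" "b = t" using h5 unfolding a_def b_def by auto
    then show ?thesis unfolding fd_target_def using False t h5 by simp
  qed
  have nN: "(k+1)*a + k*(b+1) + k \<le> n"
  proof -
    have eq: "(k+1)*a + k*(b+1) + k = k*(D+1) + a" using Dab by (simp add: algebra_simps)
    have i1: "2*k*(D+1) \<le> (s+1)*(D+1)" using k2(4) by (intro mult_right_mono) auto
    obtain s' where s': "s = s' + 3" using s3 by (metis add.commute le_Suc_ex)
    obtain D' where D': "D = D' + 3" using h5 by (metis add.commute le_Suc_ex)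
    have i2: "(s+1)*(D+1) + (D - 1) \<le> 2*s*D" unfolding s' D' by (simp add: algebra_simps)
    have i1': "2*(k*(D+1)) \<le> (s+1)*(D+1)" using i1 by (simp add: mult.assoc)
    have i2': "(s+1)*(D+1) + (D - 1) \<le> 2*(s*D)" using i2 by (simp add: mult.assoc)
    have "2*(k*(D+1) + a) = 2*(k*(D+1)) + 2*a" by (simp only: add_mult_distrib2)
    then have "2*(k*(D+1) + a) \<le> 2*(s*D)" using i1' i2' a2 by linarith
    then have "k*(D+1) + a \<le> s*D" by (simp only: mult_le_cancel1)
    then show ?thesis using eq Ds by (simp add: mult.commute)
  qed
  have kkm: "k*k \<le> m" using k2(2) sm mult_mono[of k s k s] by linarith
  have m8: "m \<le> 8*(k*k)"
  proof -
    have "(s+1)*(s+1) \<le> (2*k+1)*(2*k+1)" using k2(3) by (intro mult_mono) auto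
    moreover have "2*k \<le> k*k" using k2(1) mult_right_mono[of 2 k k] by (simp add: mult.commute)
    moreover have "(2*k+1)*(2*k+1) = 4*(k*k) + 4*k + 1" by (simp add: algebra_simps)
    ultimately show ?thesis using ms by linarith
  qed
  have cons_ok: "\<And>S X. (\<And>i j. (i,j)\<in>X \<Longrightarrow> 1 \<le> i) \<Longrightarrow> (\<And>x y. x\<in>X \<Longrightarrow> y\<in>X \<Longrightarrow> x = y) \<Longrightarrow> cons k a b n X"
    using k2(1) a1 ab nN by (simp add: cons_def)
  define Bits where "Bits = {1..k} \<times> {..<k}"
  define G where "G S = Eset k a b n S {}" for S
  define F where "F = G ` Pow Bits"
  have cB: "card Bits = k*k" unfolding Bits_def by (simp add: card_cartesian_product)
  have fB: "finite Bits" unfolding Bits_def by simp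
  have co0: "cons k a b n {}" by (rule cons_ok) auto
  have diamG: "diam n (G S) = enat D" for S
  proof -
    have "diam n (Eset k a b n S {}) = enat (a+b+1)" by (rule cons.diam_D[OF co0]) simp
    then show ?thesis unfolding G_def using Dab by simp
  qed
  have part1: "\<forall>E \<in> F. is_digraph n E \<and> diam n E = enat D \<and>
                   1/8 * real m \<le> real (card E) \<and> real (card E) \<le> 7 * real m"
  proof
    fix E assume "E \<in> F"
    then obtain S where E: "E = G S" unfolding F_def by blast
    have c1: "k*k \<le> card E" unfolding E G_def by (rule card_lower[OF a1 nN])
    have c2: "card E \<le> 4*n + 2*(k*k)" unfolding E G_def by (rule card_upper[OF a1 nN])
    have "1/8 * real m \<le> real (card E)" using c1 m8 by linarith
    moreover have "real (card E) \<le> 7 * real m" using c2 kkm h2 by linarith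
    moreover have "is_digraph n E" unfolding E G_def by (rule is_digraph_E[OF a1 nN])
    ultimately show "is_digraph n E \<and> diam n E = enat D \<and>
                   1/8 * real m \<le> real (card E) \<and> real (card E) \<le> 7 * real m"
      using diamG E by simp
  qed
  have part2: "\<forall>(enc :: (nat \<times> nat) set \<Rightarrow> bool list) (q :: bool list \<Rightarrow> nat \<times> nat \<Rightarrow> bool).
            (\<forall>E \<in> F. \<forall>e \<in> E.
               (diam n (E - {e}) = enat D \<longrightarrow> q (enc E) e) \<and>
               (diam n (E - {e}) = enat (fd_target D) \<longrightarrow> \<not> q (enc E) e))
            \<longrightarrow> (\<exists>E \<in> F. 1/8 * real m \<le> real (length (enc E)))"
  proof (intro allI impI)
    fix enc :: "(nat \<times> nat) set \<Rightarrow> bool list" and q :: "bool list \<Rightarrow> nat \<times> nat \<Rightarrow> bool"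
    assume HQ: "\<forall>E \<in> F. \<forall>e \<in> E.
               (diam n (E - {e}) = enat D \<longrightarrow> q (enc E) e) \<and>
               (diam n (E - {e}) = enat (fd_target D) \<longrightarrow> \<not> q (enc E) e)"
    have conf: False if S1: "S1 \<subseteq> Bits" and S2: "S2 \<subseteq> Bits" and eq: "enc (G S1) = enc (G S2)"
      and p1: "(i,j) \<in> S1" and p2: "(i,j) \<notin> S2" for S1 S2 i j
    proof -
      have ij: "1 \<le> i" "i \<le> k" "j < k" using p1 S1 unfolding Bits_def by auto
      define e where "e = (code k a b (P i a), code k a b (Q j 0))"
      have X1: "\<And>i' j'. (i',j') \<in> {(i,j)} \<Longrightarrow> 1 \<le> i'" using ij by auto
      have X2: "\<And>x y. x \<in> {(i,j)} \<Longrightarrow> y \<in> {(i,j)} \<Longrightarrow> x = y" by auto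
      have co: "cons k a b n {(i,j)}" by (rule cons_ok[OF X1 X2])
      have e1: "e \<in> G S1" "e \<in> G S2" unfolding e_def G_def using edge_in ij by auto
      have r1: "G S1 - {e} = Eset k a b n S1 {(i,j)}" unfolding G_def e_def by (rule Eset_remove[OF a1 nN ij])
      have r2: "G S2 - {e} = Eset k a b n S2 {(i,j)}" unfolding G_def e_def by (rule Eset_remove[OF a1 nN ij])
      have d1: "diam n (G S1 - {e}) = enat D" unfolding r1 using cons.diam_D[OF co, of S1] p1 Dab by simp
      have d2: "diam n (G S2 - {e}) = enat (fd_target D)" unfolding r2
        using cons.diam_T[OF co, of i j S2] p2 ij fdT by simp
      have F1: "G S1 \<in> F" "G S2 \<in> F" unfolding F_def using S1 S2 by auto
      have "q (enc (G S1)) e" using HQ F1(1) e1(1) d1 by blast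
      moreover have "\<not> q (enc (G S2)) e" using HQ F1(2) e1(2) d2 by blast
      ultimately show False using eq by simp
    qed
    show "\<exists>E \<in> F. 1/8 * real m \<le> real (length (enc E))"
    proof (rule ccontr)
      assume "\<not> (\<exists>E \<in> F. 1/8 * real m \<le> real (length (enc E)))"
      then have short: "\<And>E. E \<in> F \<Longrightarrow> length (enc E) < k*k"
      proof -
        fix E assume "\<not> (\<exists>E \<in> F. 1/8 * real m \<le> real (length (enc E)))" "E \<in> F"
        then have "real (length (enc E)) < 1/8 * real m" by auto
        then have "real (length (enc E)) < real (k*k)" using m8 by linarith
        then show "length (enc E) < k*k" by linarith
      qed
      let ?g = "\<lambda>S. enc (G S)"
      have img: "?g ` Pow Bits \<subseteq> {xs. length xs < k*k}" using short unfolding F_def by auto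
      have finL: "finite {xs :: bool list. length xs < k*k}"
        by (rule finite_subset[OF _ finite_lists_length_le[of "UNIV :: bool set" "k*k"]]) auto
      have "\<not> inj_on ?g (Pow Bits)"
      proof
        assume "inj_on ?g (Pow Bits)"
        then have "card (Pow Bits) \<le> card {xs :: bool list. length xs < k*k}"
          using card_inj_on_le[OF _ img finL] by blast
        moreover have "card (Pow Bits) = 2^(k*k)" using card_Pow[of Bits] cB fB by simp
        ultimately show False using card_short_lists[of "k*k"] by linarith
      qed
      then obtain S1 S2 where S: "S1 \<in> Pow Bits" "S2 \<in> Pow Bits" "?g S1 = ?g S2" "S1 \<noteq> S2"
        unfolding inj_on_def by blast
      then obtain p where "p \<in> S1 - S2 \<or> p \<in> S2 - S1" by blast
      then show False
      proof
        assume "p \<in> S1 - S2"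
        then show False using conf[of S1 S2 "fst p" "snd p"] S by auto
      next
        assume "p \<in> S2 - S1"
        then show False using conf[of S2 S1 "fst p" "snd p"] S by auto
      qed
    qed
  qed
  show ?thesis using part1 part2 by blast
qed


theorem lemma9:
  "\<exists>c1 c2 c3 :: real. c1 > 0 \<and> c2 > 0 \<and> c3 > 0 \<and>
    (\<forall>n m D :: nat. n ^ 2 \<ge> m \<and> m \<ge> n \<and> n \<ge> 4 \<and>
        real n / sqrt (real m) > real D \<and> D \<ge> 3 \<longrightarrow>
      (\<exists>F :: (nat \<times> nat) set set.
         (\<forall>E \<in> F. is_digraph n E \<and> diam n E = enat D \<and>
                   c1 * real m \<le> real (card E) \<and> real (card E) \<le> c2 * real m) \<and>
         (\<forall>(enc :: (nat \<times> nat) set \<Rightarrow> bool list) (q :: bool list \<Rightarrow> nat \<times> nat \<Rightarrow> bool).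
            (\<forall>E \<in> F. \<forall>e \<in> E.
               (diam n (E - {e}) = enat D \<longrightarrow> q (enc E) e) \<and>
               (diam n (E - {e}) = enat (fd_target D) \<longrightarrow> \<not> q (enc E) e))
            \<longrightarrow> (\<exists>E \<in> F. c3 * real m \<le> real (length (enc E))))))"
    apply (rule exI[of _ "1/8"], rule exI[of _ 7], rule exI[of _ "1/8"])
  apply (intro conjI allI impI)
     apply simp
    apply simp
   apply simp
  apply (elim conjE)
  apply (rule construction)
      apply assumption+
  done

end
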